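(* Let $(X,d)$ be a compact metric space, $f_{1,\infty}=(f_n)_{n=1}^\infty$ a sequence of continuous maps $f_n:X\to X$, and $(p_k)_{k=1}^\infty$ a sequence of positive integers. Let $(A_i)_{i=0}^\infty$ and $(B_i)_{i=0}^\infty$ be decreasing sequences of compact subsets of $X$ with $\bigcap_{i=0}^\infty A_i=\{a\}$ and $\bigcap_{i=0}^\infty B_i=\{b\}$, where $a\neq b$. Suppose that for every choice $c=(C_k)_k$ with $C_k\in\{A_k,B_k\}$ for each $k$, there exists $x_c\in X$ such that $f_1^{p_k}(x_c)\in C_k$ for all $k\ge 1$. Then $f_{1,\infty}$ is Li-Yorke chaotic.
   Context: For $n\in\mathbb{N}$, $f_1^n=f_n\circ\cdots\circ f_1$. The system $f_{1,\infty}$ is Li-Yorke chaotic if there is an uncountable set $S\subseteq X$ such that for all distinct $x,y\in S$: $\liminf_{n\to\infty}d(f_1^n(x),f_1^n(y))=0$ and $\limsup_{n\to\infty}d(f_1^n(x),f_1^n(y))>0$. *)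

theory Defs
  imports "HOL-Analysis.Analysis" "HOL-Library.Liminf_Limsup"
begin

text \<open>Non-autonomous iteration: the maps are indexed from 1 (f 0 is unused);
  comp_iter f n = f n o ... o f 1, and comp_iter f 0 = id.\<close>
fun comp_iter :: "(nat \<Rightarrow> 'a \<Rightarrow> 'a) \<Rightarrow> nat \<Rightarrow> 'a \<Rightarrow> 'a" where
  "comp_iter f 0 = id"
| "comp_iter f (Suc n) = f (Suc n) \<circ> comp_iter f n"

definition li_yorke_chaotic :: "'a::metric_space set \<Rightarrow> (nat \<Rightarrow> 'a \<Rightarrow> 'a) \<Rightarrow> bool" where
  "li_yorke_chaotic X f \<longleftrightarrow>
     (\<exists>S. S \<subseteq> X \<and> uncountable S \<and>
        (\<forall>x\<in>S. \<forall>y\<in>S. x \<noteq> y \<longrightarrow>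
           liminf (\<lambda>n. ereal (dist (comp_iter f n x) (comp_iter f n y))) = 0 \<and>
           limsup (\<lambda>n. ereal (dist (comp_iter f n x) (comp_iter f n y))) > 0))"

end

theory Submission
  imports Defs "HOL-Library.Nat_Bijection"
begin

lemma shrink:
  fixes A :: "nat \<Rightarrow> 'a::metric_space set"
  assumes "\<And>i. compact (A i)" "\<And>i. A (Suc i) \<subseteq> A i" "(\<Inter>i. A i) = {a}" "e > 0"
  shows "\<exists>K. \<forall>k\<ge>K. A k \<subseteq> ball a e"
proof (rule ccontr)
  assume H: "\<not> ?thesis"
  have dec: "A j \<subseteq> A i" if "i \<le> j" for i j
    using that assms(2) by (metis decseqD decseq_Suc_iff)
  have ne: "A k - ball a e \<noteq> {}" for k
  proof
    assume "A k - ball a e = {}"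
    then have "\<forall>j\<ge>k. A j \<subseteq> ball a e" using dec by blast
    with H show False by blast
  qed
  let ?F = "range (\<lambda>k. A k - ball a e)"
  have "A 0 \<inter> \<Inter>?F \<noteq> {}"
  proof (rule compact_imp_fip)
    show "compact (A 0)" by fact
    show "\<And>t. t \<in> ?F \<Longrightarrow> closed t"
      using assms(1) compact_imp_closed by blast
    fix F' assume F': "F' \<subseteq> ?F" "finite F'"
    then obtain I where I: "finite I" "F' = (\<lambda>k. A k - ball a e) ` I"
      by (meson finite_subset_image)
    define M where "M = Max (insert 0 I)"
    have MI: "\<forall>i\<in>I. i \<le> M" using I(1) M_def by simp
    have "A M - ball a e \<subseteq> A 0 \<inter> \<Inter>F'"
      using dec[OF le0, of M] dec MI I(2) by blast
    then show "A 0 \<inter> \<Inter>F' \<noteq> {}" using ne by blast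
  qed
  then obtain y where y: "y \<in> A 0" "\<And>k. y \<in> A k - ball a e" by blast
  then have "y \<in> (\<Inter>i. A i)" by blast
  then have "y = a" using assms(3) by blast
  then show False using y(2)[of 0] assms(4) by simp
qed

theorem mainTheorem6:
  fixes X :: "'a::metric_space set"
    and f :: "nat \<Rightarrow> 'a \<Rightarrow> 'a"
    and p :: "nat \<Rightarrow> nat"
    and A B :: "nat \<Rightarrow> 'a set"
    and a b :: 'a
  assumes "compact X"
    and "\<And>n. n \<ge> 1 \<Longrightarrow> continuous_on X (f n)"
    and "\<And>n. n \<ge> 1 \<Longrightarrow> f n ` X \<subseteq> X"
    and "\<And>k. k \<ge> 1 \<Longrightarrow> p k > 0"
    and "\<And>i. compact (A i)" "\<And>i. A i \<subseteq> X" "\<And>i. A (Suc i) \<subseteq> A i"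
    and "\<And>i. compact (B i)" "\<And>i. B i \<subseteq> X" "\<And>i. B (Suc i) \<subseteq> B i"
    and "(\<Inter>i. A i) = {a}" "(\<Inter>i. B i) = {b}" "a \<noteq> b"
    and "\<And>C. (\<forall>k. C k \<in> {A k, B k}) \<Longrightarrow>
            \<exists>x\<in>X. \<forall>k\<ge>1. comp_iter f (p k) x \<in> C k"
  shows "li_yorke_chaotic X f"
proof -
  note hyp = assms(14)
  define \<delta> where "\<delta> = dist a b / 3"
  have dpos: "\<delta> > 0" using assms(13) by (simp add: \<delta>_def)
  obtain KA where KA: "\<And>k. k \<ge> KA \<Longrightarrow> A k \<subseteq> ball a \<delta>"
    using shrink[OF assms(5) assms(7) assms(11) dpos] by blast
  obtain KB where KB: "\<And>k. k \<ge> KB \<Longrightarrow> B k \<subseteq> ball b \<delta>"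
    using shrink[OF assms(8) assms(10) assms(12) dpos] by blast
  have decA: "A j \<subseteq> A i" if "i \<le> j" for i j
    using that assms(7) by (metis decseqD decseq_Suc_iff)
  have far: "\<delta> < dist u v" if "u \<in> ball a \<delta>" "v \<in> ball b \<delta>" for u v
  proof -
    have "dist a b \<le> dist a u + dist u v + dist v b"
      by (metis dist_triangle dist_commute add_mono order_trans order_refl)
    then show ?thesis using that by (simp add: \<delta>_def dist_commute)
  qed
  have unb: "\<exists>k\<in>I. N \<le> p k" if inf: "infinite I" for I N
  proof (rule ccontr)
    assume "\<not> ?thesis"
    then have lt: "\<forall>k\<in>I. p k < N" by auto
    let ?I = "I \<inter> {max 1 (max KA KB)..}"
    have "infinite ?I"
    proof
      assume "finite ?I"
      then have "finite (I \<inter> {..<max 1 (max KA KB)} \<union> ?I)" by (simp only: finite_Un) simp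
      moreover have "I \<inter> {..<max 1 (max KA KB)} \<union> ?I = I" by auto
      ultimately show False using inf by metis
    qed
    moreover have "finite (p ` ?I)"
      using lt by (meson IntD1 finite_lessThan finite_subset image_subsetI lessThan_iff)
    ultimately obtain k0 where k0: "k0 \<in> ?I" and Finf: "infinite {k\<in>?I. p k = p k0}"
      using pigeonhole_infinite by blast
    define C where "C = (\<lambda>k. if k = k0 then B k else A k)"
    have "\<forall>k. C k \<in> {A k, B k}" by (simp add: C_def)
    then obtain x where x: "\<forall>k\<ge>1. comp_iter f (p k) x \<in> C k" using hyp by blast
    define y where "y = comp_iter f (p k0) x"
    have yA: "y \<in> A j" for j
    proof -
      have "infinite ({k\<in>?I. p k = p k0} - {k0})" using Finf by simp
      then obtain k where k: "k \<in> {k\<in>?I. p k = p k0} - {k0}" "k \<ge> j"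
        using infinite_nat_iff_unbounded_le by blast
      then have "y \<in> A k" using x[rule_format, of k] by (auto simp: C_def y_def)
      then show ?thesis using decA[OF k(2)] by blast
    qed
    then have ya: "y = a" using assms(11) by blast
    have yB: "y \<in> B k0" using x[rule_format, of k0] k0 by (auto simp: C_def y_def)
    have "KB \<le> k0" using k0 by simp
    then have yb: "y \<in> ball b \<delta>" using KB[of k0] yB by blast
    have "a \<in> A KA" using assms(11) by blast
    then have aa: "a \<in> ball a \<delta>" using KA by blast
    show False using far[of a a] ya yb aa by simp
  qed
  define Sset :: "nat set \<Rightarrow> nat set" where
    "Sset s = {k. even k \<or> fst (prod_decode (k div 2)) \<in> s}" for s
  define CC where "CC s = (\<lambda>k. if k \<in> Sset s then A k else B k)" for s
  define xs where "xs s = (SOME x. x \<in> X \<and> (\<forall>k\<ge>1. comp_iter f (p k) x \<in> CC s k))" for s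
  have xs: "xs s \<in> X \<and> (\<forall>k\<ge>1. comp_iter f (p k) (xs s) \<in> CC s k)" for s
  proof -
    have "\<forall>k. CC s k \<in> {A k, B k}" by (simp add: CC_def)
    then have "\<exists>x. x \<in> X \<and> (\<forall>k\<ge>1. comp_iter f (p k) x \<in> CC s k)" using hyp by blast
    then show ?thesis unfolding xs_def by (rule someI_ex)
  qed
  let ?D = "\<lambda>s t n. dist (comp_iter f n (xs s)) (comp_iter f n (xs t))"
  have close: "\<exists>n\<ge>N. ?D s t n < e" if "e > 0" for s t N e
  proof -
    obtain K where K: "\<And>k. k \<ge> K \<Longrightarrow> A k \<subseteq> ball a (e/2)"
      using shrink[OF assms(5) assms(7) assms(11)] \<open>e > 0\<close> by (meson half_gt_zero)
    let ?I = "{k. k \<ge> max 1 K \<and> even k}"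
    have "infinite ?I" unfolding infinite_nat_iff_unbounded_le
    proof
      fix m
      show "\<exists>n\<ge>m. n \<in> ?I"
        by (intro exI[of _ "2 * (m + max 1 K)"]) auto
    qed
    then obtain k where k: "k \<in> ?I" "N \<le> p k" using unb by blast
    have k1: "k \<ge> 1" "k \<in> Sset s" "k \<in> Sset t" "K \<le> k" using k by (auto simp: Sset_def)
    have "comp_iter f (p k) (xs s) \<in> A k" "comp_iter f (p k) (xs t) \<in> A k"
      using xs[of s] xs[of t] k1 by (auto simp: CC_def)
    then have "comp_iter f (p k) (xs s) \<in> ball a (e/2)" "comp_iter f (p k) (xs t) \<in> ball a (e/2)"
      using K[OF k1(4)] by blast+
    then have "?D s t (p k) < e"
      by (metis dist_commute dist_triangle_half_l mem_ball)
    then show ?thesis using k by blast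
  qed
  have apart: "\<exists>n\<ge>N. \<delta> < ?D s t n" if "s \<noteq> t" for s t N
  proof -
    obtain n0 where n0: "(n0 \<in> s) \<noteq> (n0 \<in> t)" using \<open>s \<noteq> t\<close> by blast
    let ?I = "{k. k \<ge> max 1 (max KA KB) \<and> odd k \<and> fst (prod_decode (k div 2)) = n0}"
    have "infinite ?I" unfolding infinite_nat_iff_unbounded_le
    proof
      fix m
      let ?k = "2 * prod_encode (n0, m + max 1 (max KA KB)) + 1"
      have "m + max 1 (max KA KB) \<le> prod_encode (n0, m + max 1 (max KA KB))"
        by (rule le_prod_encode_2)
      then show "\<exists>n\<ge>m. n \<in> ?I"
        by (intro exI[of _ ?k]) auto
    qed
    then obtain k where k: "k \<in> ?I" "N \<le> p k" using unb by blast
    have "k \<in> Sset s \<longleftrightarrow> n0 \<in> s" "k \<in> Sset t \<longleftrightarrow> n0 \<in> t" using k by (auto simp: Sset_def)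
    then have "(comp_iter f (p k) (xs s) \<in> ball a \<delta> \<and> comp_iter f (p k) (xs t) \<in> ball b \<delta>) \<or>
          (comp_iter f (p k) (xs t) \<in> ball a \<delta> \<and> comp_iter f (p k) (xs s) \<in> ball b \<delta>)"
    proof -
      have k1: "k \<ge> 1" "KA \<le> k" "KB \<le> k" using k by auto
      have ms: "comp_iter f (p k) (xs s) \<in> (if k \<in> Sset s then A k else B k)"
        using xs[of s] k1 by (simp add: CC_def)
      have mt: "comp_iter f (p k) (xs t) \<in> (if k \<in> Sset t then A k else B k)"
        using xs[of t] k1 by (simp add: CC_def)
      show ?thesis
      proof (cases "n0 \<in> s")
        case True
        then have "comp_iter f (p k) (xs s) \<in> A k" "comp_iter f (p k) (xs t) \<in> B k"
          using ms mt n0 \<open>k \<in> Sset s \<longleftrightarrow> n0 \<in> s\<close> \<open>k \<in> Sset t \<longleftrightarrow> n0 \<in> t\<close> by auto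
        then show ?thesis using KA[OF k1(2)] KB[OF k1(3)] by blast
      next
        case False
        then have "comp_iter f (p k) (xs s) \<in> B k" "comp_iter f (p k) (xs t) \<in> A k"
          using ms mt n0 \<open>k \<in> Sset s \<longleftrightarrow> n0 \<in> s\<close> \<open>k \<in> Sset t \<longleftrightarrow> n0 \<in> t\<close> by auto
        then show ?thesis using KA[OF k1(2)] KB[OF k1(3)] by blast
      qed
    qed
    then have "\<delta> < ?D s t (p k)"
      using far[of "comp_iter f (p k) (xs s)" "comp_iter f (p k) (xs t)"]
        far[of "comp_iter f (p k) (xs t)" "comp_iter f (p k) (xs s)"] by (auto simp: dist_commute)
    then show ?thesis using k by blast
  qed
  have inj: "inj xs"
  proof
    fix s t assume "xs s = xs t"
    show "s = t"
    proof (rule ccontr)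
      assume "s \<noteq> t"
      then obtain n where "\<delta> < ?D s t n" using apart[of s t 0] by blast
      then show False using dpos \<open>xs s = xs t\<close> by simp
    qed
  qed
  have unc: "uncountable (UNIV :: nat set set)"
  proof
    assume "countable (UNIV :: nat set set)"
    then obtain g :: "nat \<Rightarrow> nat set" where "range g = UNIV"
      by (metis uncountable_def UNIV_not_empty)
    then show False using Cantors_theorem[of "UNIV :: nat set"] by (simp add: Pow_UNIV)
  qed
  show ?thesis unfolding li_yorke_chaotic_def
  proof (intro exI[of _ "range xs"] conjI ballI impI)
    show "range xs \<subseteq> X" using xs by blast
    show "uncountable (range xs)"
    proof
      assume "countable (range xs)"
      then have "countable (UNIV :: nat set set)" by (rule countable_image_inj_on[OF _ inj])
      then show False using unc by blast
    qed
  next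
    fix x y assume "x \<in> range xs" "y \<in> range xs" "x \<noteq> y"
    then obtain s t where st: "x = xs s" "y = xs t" "s \<noteq> t" by blast
    have "liminf (\<lambda>n. ereal (?D s t n)) \<le> 0"
    proof (rule ccontr)
      assume "\<not> ?thesis"
      then have "0 < liminf (\<lambda>n. ereal (?D s t n))" by simp
      then obtain z where z: "0 < ereal z" "ereal z < liminf (\<lambda>n. ereal (?D s t n))"
        using ereal_dense2 by blast
      then have "eventually (\<lambda>n. ereal z < ereal (?D s t n)) sequentially"
        using less_LiminfD[OF z(2)] by simp
      then obtain N where "\<And>n. n \<ge> N \<Longrightarrow> z < ?D s t n"
        unfolding eventually_sequentially by auto
      moreover have "z > 0" using z(1) by simp
      then obtain n where "n \<ge> N" "?D s t n < z" using close[of z N s t] by blast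
      ultimately show False by force
    qed
    moreover have "0 \<le> liminf (\<lambda>n. ereal (?D s t n))"
      by (rule Liminf_bounded) simp
    moreover have "0 < limsup (\<lambda>n. ereal (?D s t n))"
    proof (rule ccontr)
      assume "\<not> ?thesis"
      then have "limsup (\<lambda>n. ereal (?D s t n)) \<le> 0" by simp
      then have "eventually (\<lambda>n. ereal (?D s t n) < ereal \<delta>) sequentially"
      proof -
        have "limsup (\<lambda>n. ereal (?D s t n)) < ereal \<delta>"
          using \<open>limsup (\<lambda>n. ereal (?D s t n)) \<le> 0\<close> dpos
          by (meson ereal_less(2) order_le_less_trans)
        then show ?thesis by (rule Limsup_lessD)
      qed
      then obtain N where "\<And>n. n \<ge> N \<Longrightarrow> ?D s t n < \<delta>"
        unfolding eventually_sequentially by auto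
      moreover obtain n where "n \<ge> N" "\<delta> < ?D s t n" using apart[OF st(3), of N] by blast
      ultimately show False by force
    qed
    ultimately have R: "liminf (\<lambda>n. ereal (dist (comp_iter f n x) (comp_iter f n y))) = 0 \<and>
        0 < limsup (\<lambda>n. ereal (dist (comp_iter f n x) (comp_iter f n y)))"
      using st by simp
    then show "liminf (\<lambda>n. ereal (dist (comp_iter f n x) (comp_iter f n y))) = 0" by blast
    from R show "0 < limsup (\<lambda>n. ereal (dist (comp_iter f n x) (comp_iter f n y)))" by blast
  qed
qed

end
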